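(* There is a universal constant $C>0$ such that the following holds in the standing setting. For $\varepsilon>0$ let $N_\delta=\max\{k\in\mathbb{N}:\lambda_k>\delta\}$ and $$\delta^\ast=\min\Big\{\delta \;\Big|\; \delta>\nu(\Omega)\varepsilon^2,\ N_\delta\ge \frac{\lambda_1\exp\{-\frac{1}{4C}\mathcal{E}(\delta,\{\lambda_i\}_{i=1}^\infty)\}}{\big(\delta^{1/2}-\nu(\Omega)^{1/2}\varepsilon\big)^2}\Big\}.$$ Then $$\mathcal{H}^{\rm ext}\Big(\frac{\varepsilon}{2}, B_{\mathcal{H}_K}, C(\Omega)\Big)\ge \frac14\,\mathcal{E}(\delta^\ast,\{\lambda_i\}_{i=1}^\infty).$$
   Context: Standing setting: $\Omega\subseteq\mathbb{R}^n$ compact, $\nu$ a finite Borel measure on $\Omega$ (total mass $\nu(\Omega)$), $K:\Omega\times\Omega\to\mathbb{R}$ continuous, symmetric, positive semidefinite; $O_K[\phi](x)=\int_\Omega K(x,y)\phi(y)\,d\nu(y)$ on $L_2(\nu)$, with an orthonormal basis $\{\phi_i\}$ of $L_2(\nu)$ of continuous eigenfunctions, $O_K\phi_i=\lambda_i\phi_i$, $\lambda_1\ge\lambda_2\ge\dots>0$, and $K(x,y)=\sum_i\lambda_i\phi_i(x)\phi_i(y)$ uniformly. $\mathcal{H}_K$ is the RKHS of $K$, equal to $\{\sum a_i\phi_i:\sum a_i^2/\lambda_i<\infty\}$ with $\langle\sum a_i\phi_i,\sum b_i\phi_i\rangle_{\mathcal{H}_K}=\sum a_ib_i/\lambda_i$.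 $C(\Omega)$ carries the sup norm; $B_X$ is the open unit ball of $X$. $\mathcal{H}^{\rm ext}(\varepsilon,A,X)$ is the natural logarithm of the minimal number of balls $c+\varepsilon B_X$, $c\in X$, covering $A$. $\mathcal{E}(\varepsilon,\{\lambda_i\}_{i=1}^N)=\sum_{i\le N,\lambda_i>\varepsilon}\ln(\lambda_i/\varepsilon)$. *)

theory Defs
  imports "HOL-Analysis.Analysis"
begin

text \<open>Points of \<open>\<real>\<^sup>n\<close> are encoded as functions \<open>nat \<Rightarrow> real\<close> vanishing at all
  indices \<open>\<ge> n\<close>, so that the dimension \<open>n\<close> can be quantified inside the formula
  (the constant is universal, independent of the dimension).
  Eigenvalues/eigenfunctions are indexed from 0, i.e. \<open>lam 0\<close> is \<open>\<lambda>\<^sub>1\<close>.\<close>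

definition kernel_setting ::
  "nat \<Rightarrow> (nat \<Rightarrow> real) set \<Rightarrow> (nat \<Rightarrow> real) measure \<Rightarrow>
   ((nat \<Rightarrow> real) \<Rightarrow> (nat \<Rightarrow> real) \<Rightarrow> real) \<Rightarrow>
   (nat \<Rightarrow> (nat \<Rightarrow> real) \<Rightarrow> real) \<Rightarrow> (nat \<Rightarrow> real) \<Rightarrow> bool" where
  "kernel_setting n \<Omega> \<nu> K \<phi> lam \<longleftrightarrow>
     \<Omega> \<subseteq> {x. \<forall>i\<ge>n. x i = 0} \<and> compact \<Omega> \<and>
     sets \<nu> = sets (restrict_space borel \<Omega>) \<and> finite_measure \<nu> \<and>
     continuous_on (\<Omega> \<times> \<Omega>) (\<lambda>(x, y). K x y) \<and>
     (\<forall>x\<in>\<Omega>. \<forall>y\<in>\<Omega>. K x y = K y x) \<and>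
     (\<forall>xs c. set xs \<subseteq> \<Omega> \<longrightarrow>
        0 \<le> (\<Sum>i<length xs. \<Sum>j<length xs. c i * c j * K (xs ! i) (xs ! j))) \<and>
     (\<forall>i. continuous_on \<Omega> (\<phi> i)) \<and>
     (\<forall>i j. (\<integral>x. \<phi> i x * \<phi> j x \<partial>\<nu>) = (if i = j then 1 else 0)) \<and>
     (\<forall>f \<in> borel_measurable \<nu>. integrable \<nu> (\<lambda>x. (f x)\<^sup>2) \<and>
          (\<forall>i. (\<integral>x. f x * \<phi> i x \<partial>\<nu>) = 0) \<longrightarrow> (AE x in \<nu>. f x = 0)) \<and>
     (\<forall>i. AE x in \<nu>. (\<integral>y. K x y * \<phi> i y \<partial>\<nu>) = lam i * \<phi> i x) \<and>
     (\<forall>i j. i \<le> j \<longrightarrow> lam j \<le> lam i) \<and> (\<forall>i. 0 < lam i) \<and>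
     uniform_limit (\<Omega> \<times> \<Omega>)
       (\<lambda>N (x, y). \<Sum>i<N. lam i * \<phi> i x * \<phi> i y) (\<lambda>(x, y). K x y) sequentially"

definition rkhs_ball ::
  "'a set \<Rightarrow> (nat \<Rightarrow> 'a \<Rightarrow> real) \<Rightarrow> (nat \<Rightarrow> real) \<Rightarrow> ('a \<Rightarrow> real) set" where
  "rkhs_ball \<Omega> \<phi> lam = {f. \<exists>a. summable (\<lambda>i. (a i)\<^sup>2 / lam i) \<and>
      (\<Sum>i. (a i)\<^sup>2 / lam i) < 1 \<and> (\<forall>x\<in>\<Omega>. (\<lambda>i. a i * \<phi> i x) sums f x)}"

definition sup_dist :: "'a set \<Rightarrow> ('a \<Rightarrow> real) \<Rightarrow> ('a \<Rightarrow> real) \<Rightarrow> real" where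
  "sup_dist \<Omega> f g = Sup ((\<lambda>x. \<bar>f x - g x\<bar>) ` \<Omega>)"

definition ext_cover ::
  "'a::topological_space set \<Rightarrow> real \<Rightarrow> ('a \<Rightarrow> real) set \<Rightarrow> ('a \<Rightarrow> real) set \<Rightarrow> bool" where
  "ext_cover \<Omega> \<epsilon> A Cs \<longleftrightarrow> (\<forall>c\<in>Cs. continuous_on \<Omega> c) \<and>
      (\<forall>f\<in>A. \<exists>c\<in>Cs. sup_dist \<Omega> f c < \<epsilon>)"

definition H_ext :: "real \<Rightarrow> ('a::topological_space \<Rightarrow> real) set \<Rightarrow> 'a set \<Rightarrow> ereal" where
  "H_ext \<epsilon> A \<Omega> =
     (if \<exists>Cs. finite Cs \<and> ext_cover \<Omega> \<epsilon> A Cs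
      then ereal (ln (real (LEAST m. \<exists>Cs. finite Cs \<and> card Cs = m \<and> ext_cover \<Omega> \<epsilon> A Cs)))
      else \<infinity>)"

definition entropyE :: "real \<Rightarrow> (nat \<Rightarrow> real) \<Rightarrow> real" where
  "entropyE \<epsilon> lam = (\<Sum>i\<in>{i. lam i > \<epsilon>}. ln (lam i / \<epsilon>))"

text \<open>\<open>N\<^sub>\<delta> = max{k : \<lambda>\<^sub>k > \<delta>}\<close> (1-based), i.e. the number of eigenvalues exceeding \<open>\<delta>\<close>.\<close>
definition Ndelta :: "(nat \<Rightarrow> real) \<Rightarrow> real \<Rightarrow> nat" where
  "Ndelta lam \<delta> = card {k. lam k > \<delta>}"

definition delta_set :: "real \<Rightarrow> 'a measure \<Rightarrow> real \<Rightarrow> (nat \<Rightarrow> real) \<Rightarrow> real set" where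
  "delta_set C \<nu> \<epsilon> lam = {\<delta>. \<delta> > measure \<nu> (space \<nu>) * \<epsilon>\<^sup>2 \<and>
      real (Ndelta lam \<delta>) \<ge> lam 0 * exp (- (1 / (4 * C)) * entropyE \<delta> lam)
        / (sqrt \<delta> - sqrt (measure \<nu> (space \<nu>)) * \<epsilon>)\<^sup>2}"

end

theory Submission
  imports Defs
begin
lemma lborel_aff_1d:
  fixes a b :: real assumes "a > 0" "A \<in> sets borel"
  shows "emeasure lborel A = ennreal a * emeasure lborel ((\<lambda>t. a * t + b) -` A)"
proof -
  have "emeasure lborel A = emeasure (density (distr lborel borel (\<lambda>x. b + a * x)) (\<lambda>_. ennreal \<bar>a\<bar>)) A"
    using lborel_real_affine[of a b] assms by simp
  also have "\<dots> = ennreal a * emeasure (distr lborel borel (\<lambda>x. b + a * x)) A"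
    using assms by (subst emeasure_density_const) auto
  also have "\<dots> = ennreal a * emeasure lborel ((\<lambda>t. a * t + b) -` A)"
    using assms by (subst emeasure_distr) (auto simp: add.commute)
  finally show ?thesis .
qed

lemma PiM_affine:
  fixes I :: "nat set" and \<alpha> \<beta> :: "nat \<Rightarrow> real"
  assumes I: "finite I" and pos: "\<And>i. i\<in>I \<Longrightarrow> \<alpha> i > 0"
  assumes A: "A \<in> sets (PiM I (\<lambda>_. lborel))"
  shows "emeasure (PiM I (\<lambda>_. lborel)) A = (\<Prod>i\<in>I. ennreal (\<alpha> i)) *
     emeasure (PiM I (\<lambda>_. lborel)) ((\<lambda>x. \<lambda>i\<in>I. \<alpha> i * x i + \<beta> i) -` A \<inter> space (PiM I (\<lambda>_. lborel)))"
proof -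
  interpret product_sigma_finite "\<lambda>_. lborel" by standard
  define \<mu> where "\<mu> = PiM I (\<lambda>_. lborel::real measure)"
  define T where "T = (\<lambda>x::nat\<Rightarrow>real. \<lambda>i\<in>I. \<alpha> i * x i + \<beta> i)"
  have Tm: "T \<in> measurable \<mu> \<mu>"
    unfolding T_def \<mu>_def by measurable
  define P where "P = density (distr \<mu> \<mu> T) (\<lambda>_. \<Prod>i\<in>I. ennreal (\<alpha> i))"
  have "P = PiM I (\<lambda>_. lborel)"
  proof (rule PiM_eqI[OF I])
    show "sets P = sets (PiM I (\<lambda>_. lborel))" by (simp add: P_def \<mu>_def)
  next
    fix B assume B: "\<And>i. i \<in> I \<Longrightarrow> B i \<in> sets (lborel::real measure)"
    have Bs: "Pi\<^sub>E I B \<in> sets \<mu>" unfolding \<mu>_def using B by (intro sets_PiM_I_finite I) auto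
    have pre: "T -` Pi\<^sub>E I B \<inter> space \<mu> = Pi\<^sub>E I (\<lambda>i. (\<lambda>t. \<alpha> i * t + \<beta> i) -` B i)"
      by (auto simp: T_def \<mu>_def space_PiM PiE_def Pi_def extensional_def)
    have "emeasure P (Pi\<^sub>E I B) = (\<Prod>i\<in>I. ennreal (\<alpha> i)) * emeasure \<mu> (T -` Pi\<^sub>E I B \<inter> space \<mu>)"
      unfolding P_def using Bs Tm by (simp add: emeasure_density_const emeasure_distr)
    also have "\<dots> = (\<Prod>i\<in>I. ennreal (\<alpha> i)) * (\<Prod>i\<in>I. emeasure lborel ((\<lambda>t. \<alpha> i * t + \<beta> i) -` B i))"
    proof -
      have "(\<lambda>t. \<alpha> i * t + \<beta> i) -` B i \<in> sets lborel" if "i \<in> I" for i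
      proof -
        have "(\<lambda>t. \<alpha> i * t + \<beta> i) \<in> borel_measurable borel" by measurable
        from measurable_sets[OF this B[OF that, simplified]] show ?thesis by simp
      qed
      then show ?thesis by (simp only: pre, simp add: \<mu>_def emeasure_PiM[OF I])
    qed
    also have "\<dots> = (\<Prod>i\<in>I. ennreal (\<alpha> i) * emeasure lborel ((\<lambda>t. \<alpha> i * t + \<beta> i) -` B i))"
      by (simp add: prod.distrib)
    also have "\<dots> = (\<Prod>i\<in>I. emeasure lborel (B i))"
      using B pos by (intro prod.cong refl lborel_aff_1d[symmetric]) auto
    finally show "emeasure P (Pi\<^sub>E I B) = (\<Prod>i\<in>I. emeasure lborel (B i))" .
  qed
  then have "emeasure (PiM I (\<lambda>_. lborel)) A = emeasure P A" by simp
  also have "\<dots> = (\<Prod>i\<in>I. ennreal (\<alpha> i)) * emeasure \<mu> (T -` A \<inter> space \<mu>)"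
    unfolding P_def using A Tm by (simp add: emeasure_density_const emeasure_distr \<mu>_def)
  finally show ?thesis unfolding \<mu>_def T_def .
qed


lemma vol_cover:
  fixes lam :: "nat \<Rightarrow> real" and Bs :: "(nat\<Rightarrow>real) set" and N :: nat
  assumes fin: "finite Bs" and lpos: "\<And>i. i < N \<Longrightarrow> lam i > 0" and r: "r > 0"
  and cov: "\<And>a. (\<Sum>i<N. (a i)\<^sup>2 / lam i) < 1 \<Longrightarrow> (\<exists>b\<in>Bs. (\<Sum>i<N. (a i - b i)\<^sup>2) < r\<^sup>2)"
  shows "(\<Prod>i<N. sqrt (lam i)) / 2^N \<le> real (card Bs) * r^N"
proof -
  define I where "I = {..<N}"
  have I: "finite I" "card I = N" by (auto simp: I_def)
  define \<mu> where "\<mu> = PiM I (\<lambda>_. lborel::real measure)"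
  define Bc where "Bc \<rho> = {f. sqrt (\<Sum>i\<in>I. (f i)\<^sup>2) \<le> \<rho>} \<inter> space \<mu>" for \<rho>
  define V where "V = unit_ball_vol (real N)"
  have V: "V > 0" by (simp add: V_def)
  have Bcm: "Bc \<rho> \<in> sets \<mu>" for \<rho>
  proof -
    have m: "(\<lambda>f::nat\<Rightarrow>real. sqrt (\<Sum>i\<in>I. (f i)\<^sup>2)) \<in> borel_measurable \<mu>"
      unfolding \<mu>_def by measurable
    have "Bc \<rho> = (\<lambda>f::nat\<Rightarrow>real. sqrt (\<Sum>i\<in>I. (f i)\<^sup>2)) -` {..\<rho>} \<inter> space \<mu>"
      by (auto simp: Bc_def)
    then show ?thesis using measurable_sets[OF m, of "{..\<rho>}"] by simp
  qed
  have Bcv: "emeasure \<mu> (Bc \<rho>) = ennreal (V * \<rho> ^ N)" if "\<rho> > 0" for \<rho>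
    unfolding Bc_def \<mu>_def V_def using emeasure_cball_aux[OF I(1) that] I by simp
  define S where "S b = {x. sqrt (\<Sum>i\<in>I. (x i - b i)\<^sup>2) \<le> r} \<inter> space \<mu>" for b :: "nat \<Rightarrow> real"
  have Sv: "emeasure \<mu> (S b) = ennreal (V * r ^ N)" for b
  proof -
    have "emeasure \<mu> (Bc r) = (\<Prod>i\<in>I. ennreal 1) *
       emeasure \<mu> ((\<lambda>x. \<lambda>i\<in>I. 1 * x i + (- b i)) -` Bc r \<inter> space \<mu>)"
      unfolding \<mu>_def by (rule PiM_affine[OF I(1)]) (use Bcm in \<open>auto simp: \<mu>_def\<close>)
    also have "(\<lambda>x. \<lambda>i\<in>I. 1 * x i + (- b i)) -` Bc r \<inter> space \<mu> = S b"
      by (auto simp: Bc_def S_def \<mu>_def space_PiM PiE_def extensional_def)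
    finally show ?thesis using Bcv[OF r] by simp
  qed
  have Sm: "S b \<in> sets \<mu>" for b
  proof -
    have m: "(\<lambda>f::nat\<Rightarrow>real. sqrt (\<Sum>i\<in>I. (f i - b i)\<^sup>2)) \<in> borel_measurable \<mu>"
      unfolding \<mu>_def by measurable
    have "S b = (\<lambda>f::nat\<Rightarrow>real. sqrt (\<Sum>i\<in>I. (f i - b i)\<^sup>2)) -` {..r} \<inter> space \<mu>"
      by (auto simp: S_def)
    then show ?thesis using measurable_sets[OF m, of "{..r}"] by simp
  qed
  define E where "E = {x. sqrt (\<Sum>i\<in>I. (1 / sqrt (lam i) * x i + 0)\<^sup>2) \<le> 1/2} \<inter> space \<mu>"
  have Ev: "emeasure \<mu> E = ennreal ((\<Prod>i<N. sqrt (lam i)) * (V * (1/2) ^ N))"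
  proof -
    have "emeasure \<mu> (Bc (1/2)) = (\<Prod>i\<in>I. ennreal (1 / sqrt (lam i))) *
       emeasure \<mu> ((\<lambda>x. \<lambda>i\<in>I. (1 / sqrt (lam i)) * x i + 0) -` Bc (1/2) \<inter> space \<mu>)"
      unfolding \<mu>_def by (rule PiM_affine[OF I(1)]) (use Bcm lpos in \<open>auto simp: \<mu>_def I_def\<close>)
    also have "(\<lambda>x. \<lambda>i\<in>I. (1 / sqrt (lam i)) * x i + 0) -` Bc (1/2) \<inter> space \<mu> = E"
      by (auto simp: Bc_def E_def \<mu>_def space_PiM PiE_def extensional_def)
    finally have "ennreal (V * (1/2) ^ N) = ennreal (\<Prod>i\<in>I. 1 / sqrt (lam i)) * emeasure \<mu> E"
      using Bcv[of "1/2"] lpos prod_ennreal[of I "\<lambda>i. 1 / sqrt (lam i)"] by (simp add: I_def less_imp_le)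
    then have "ennreal (\<Prod>i\<in>I. sqrt (lam i)) * ennreal (V * (1/2) ^ N) = 
       ennreal (\<Prod>i\<in>I. sqrt (lam i)) * ennreal (\<Prod>i\<in>I. 1 / sqrt (lam i)) * emeasure \<mu> E"
      by (simp add: mult.assoc)
    also have "ennreal (\<Prod>i\<in>I. sqrt (lam i)) * ennreal (\<Prod>i\<in>I. 1 / sqrt (lam i)) = 1"
    proof -
      have "(\<Prod>i\<in>I. sqrt (lam i)) * (\<Prod>i\<in>I. 1 / sqrt (lam i)) = (\<Prod>i\<in>I. sqrt (lam i) * (1 / sqrt (lam i)))"
        by (rule prod.distrib[symmetric])
      also have "\<dots> = 1" using lpos by (intro prod.neutral) (force simp: I_def)
      finally show ?thesis using lpos
        by (subst ennreal_mult''[symmetric]) (auto simp: I_def less_imp_le intro!: prod_nonneg)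
    qed
    finally have "ennreal (\<Prod>i\<in>I. sqrt (lam i)) * ennreal (V * (1/2) ^ N) = emeasure \<mu> E" by simp
    moreover have "0 \<le> (\<Prod>i\<in>I. sqrt (lam i))" by (intro prod_nonneg) (use lpos in \<open>auto simp: I_def less_imp_le\<close>)
    ultimately show ?thesis using V by (simp add: I_def ennreal_mult')
  qed
  have sub: "E \<subseteq> (\<Union>b\<in>Bs. S b)"
  proof
    fix x assume x: "x \<in> E"
    have "(\<Sum>i<N. (x i)\<^sup>2 / lam i) = (\<Sum>i\<in>I. (1 / sqrt (lam i) * x i + 0)\<^sup>2)"
      using lpos by (auto simp: I_def power_mult_distrib power_divide less_imp_le intro!: sum.cong)
    also have "\<dots> \<le> 1/4"
    proof -
      have "sqrt (\<Sum>i\<in>I. (1 / sqrt (lam i) * x i + 0)\<^sup>2) \<le> 1/2" using x by (simp add: E_def)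
      moreover have "0 \<le> (\<Sum>i\<in>I. (1 / sqrt (lam i) * x i + 0)\<^sup>2)" by (intro sum_nonneg) simp
      ultimately have "(\<Sum>i\<in>I. (1 / sqrt (lam i) * x i + 0)\<^sup>2) \<le> (1/2)^2"
        using real_sqrt_le_iff'[of "(\<Sum>i\<in>I. (1 / sqrt (lam i) * x i + 0)\<^sup>2)" "1/2"] by linarith
      then show ?thesis by (simp add: power_divide)
    qed
    finally obtain b where b: "b \<in> Bs" "(\<Sum>i<N. (x i - b i)\<^sup>2) < r\<^sup>2" using cov by force
    then have "sqrt (\<Sum>i\<in>I. (x i - b i)\<^sup>2) \<le> r"
      using r by (simp add: I_def real_sqrt_le_iff' sum_nonneg)
    then show "x \<in> (\<Union>b\<in>Bs. S b)" using b x by (auto simp: S_def E_def)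
  qed
  have "emeasure \<mu> E \<le> emeasure \<mu> (\<Union>b\<in>Bs. S b)"
    by (rule emeasure_mono[OF sub]) (use Sm fin in auto)
  also have "\<dots> \<le> (\<Sum>b\<in>Bs. emeasure \<mu> (S b))"
    by (rule emeasure_subadditive_finite) (use Sm fin in auto)
  also have "\<dots> = ennreal (real (card Bs) * (V * r ^ N))" using Sv r V by (simp add: ennreal_of_nat_eq_real_of_nat ennreal_mult')
  finally have "(\<Prod>i<N. sqrt (lam i)) * (V * (1/2) ^ N) \<le> real (card Bs) * (V * r ^ N)"
    using Ev r V by (simp add: ennreal_le_iff)
  then have "((\<Prod>i<N. sqrt (lam i)) / 2^N) * V \<le> (real (card Bs) * r ^ N) * V"
    by (simp add: field_simps power_one_over)
  then show ?thesis using V by (meson mult_le_cancel_right_pos)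
qed



lemma cont_int:
  fixes g :: "'a::topological_space \<Rightarrow> real"
  assumes "compact \<Omega>" "sets \<nu> = sets (restrict_space borel \<Omega>)" "finite_measure \<nu>"
    "continuous_on \<Omega> g"
  shows "integrable \<nu> g"
proof -
  interpret finite_measure \<nu> by fact
  have sp: "space \<nu> = \<Omega>"
    using sets_eq_imp_space_eq[OF assms(2)] by (simp add: space_restrict_space)
  have m: "g \<in> borel_measurable \<nu>"
    by (subst measurable_cong_sets[OF assms(2) refl]) (rule borel_measurable_continuous_on_restrict[OF assms(4)])
  have "bounded (g ` \<Omega>)" by (intro compact_imp_bounded compact_continuous_image assms)
  then obtain B where B: "\<And>x. x \<in> \<Omega> \<Longrightarrow> norm (g x) \<le> B" by (auto simp: bounded_iff)
  show ?thesis
    by (rule integrable_const_bound[where B=B]) (use B sp m in auto)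
qed

lemma bessel:
  fixes h :: "'a \<Rightarrow> real" and \<phi> :: "nat \<Rightarrow> 'a \<Rightarrow> real" and N :: nat
  assumes ON: "\<And>i j. (\<integral>x. \<phi> i x * \<phi> j x \<partial>\<nu>) = (if i = j then 1 else 0)"
    and ih: "integrable \<nu> (\<lambda>x. (h x)\<^sup>2)" and ihp: "\<And>i. integrable \<nu> (\<lambda>x. h x * \<phi> i x)"
    and ipp: "\<And>i j. integrable \<nu> (\<lambda>x. \<phi> i x * \<phi> j x)"
  shows "(\<Sum>i<N. (\<integral>x. h x * \<phi> i x \<partial>\<nu>)\<^sup>2) \<le> (\<integral>x. (h x)\<^sup>2 \<partial>\<nu>)"
proof -
  define d where "d i = (\<integral>x. h x * \<phi> i x \<partial>\<nu>)" for i
  have eq: "(\<lambda>x. (h x - (\<Sum>i<N. d i * \<phi> i x))\<^sup>2) = (\<lambda>x. ((h x)\<^sup>2 -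
      2 * (\<Sum>i<N. d i * (h x * \<phi> i x))) + (\<Sum>i<N. \<Sum>j<N. d i * d j * (\<phi> i x * \<phi> j x)))"
    by (auto simp: power2_diff power2_eq_square sum_product sum_distrib_left algebra_simps)
  have i1: "integrable \<nu> (\<lambda>x. 2 * (\<Sum>i<N. d i * (h x * \<phi> i x)))"
    using ihp by (intro integrable_mult_right integrable_sum) auto
  have i2: "integrable \<nu> (\<lambda>x. (\<Sum>i<N. \<Sum>j<N. d i * d j * (\<phi> i x * \<phi> j x)))"
    by (auto intro!: integrable_sum integrable_mult_right ipp)
  have "0 \<le> (\<integral>x. (h x - (\<Sum>i<N. d i * \<phi> i x))\<^sup>2 \<partial>\<nu>)" by simp
  also have "\<dots> = (\<integral>x. (h x)\<^sup>2 \<partial>\<nu>) - 2 * (\<Sum>i<N. d i * d i) +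
      (\<Sum>i<N. \<Sum>j<N. d i * d j * (if i = j then 1 else 0))"
    unfolding eq using ih i1 i2 ihp ipp
    by (simp add: integral_add integral_diff integral_sum integrable_sum ON d_def)
  also have "(\<Sum>i<N. \<Sum>j<N. d i * d j * (if i = j then 1 else 0)) = (\<Sum>i<N. d i * d i)"
    proof (rule sum.cong[OF refl])
    fix i assume "i \<in> {..<N}"
    then show "(\<Sum>j<N. d i * d j * (if i = j then 1 else 0)) = d i * d i"
    proof -
      have "(\<lambda>j. d i * d j * (if i = j then 1 else 0)) = (\<lambda>j. if j = i then d i * d i else 0)" by auto
      then have "(\<Sum>j<N. d i * d j * (if i = j then 1 else 0)) = (\<Sum>j<N. if j = i then d i * d i else 0)"
        by (rule arg_cong[where f="\<lambda>g. sum g {..<N}"])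
      also have "\<dots> = d i * d i" using \<open>i \<in> {..<N}\<close> by (subst sum.delta) auto
      finally show ?thesis .
    qed
  qed
  finally show ?thesis by (simp add: d_def power2_eq_square)
qed


theorem theorem2:
  shows "\<exists>C>0. \<forall>n \<Omega> \<nu> K \<phi> lam \<epsilon> \<delta>s.
     kernel_setting n \<Omega> \<nu> K \<phi> lam \<and> \<epsilon> > 0 \<and>
     \<delta>s \<in> delta_set C \<nu> \<epsilon> lam \<and> (\<forall>\<delta>\<in>delta_set C \<nu> \<epsilon> lam. \<delta>s \<le> \<delta>)
     \<longrightarrow> H_ext (\<epsilon> / 2) (rkhs_ball \<Omega> \<phi> lam) \<Omega> \<ge> ereal (entropyE \<delta>s lam / 4)"
proof (intro exI[of _ "1::real"] conjI allI impI)
  show "(0::real) < 1" by simp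
next
  fix n \<Omega> \<nu> K \<phi> lam \<epsilon> \<delta>s
  assume HH: "kernel_setting n \<Omega> \<nu> K \<phi> lam \<and> \<epsilon> > 0 \<and>
     \<delta>s \<in> delta_set 1 \<nu> \<epsilon> lam \<and> (\<forall>\<delta>\<in>delta_set 1 \<nu> \<epsilon> lam. \<delta>s \<le> \<delta>)"
  then have ks: "kernel_setting n \<Omega> \<nu> K \<phi> lam" and eps: "\<epsilon> > 0"
    and ds: "\<delta>s \<in> delta_set 1 \<nu> \<epsilon> lam" by auto
  from ks have cpt: "compact \<Omega>" and sets: "sets \<nu> = sets (restrict_space borel \<Omega>)"
    and fm: "finite_measure \<nu>" and phic: "\<And>i. continuous_on \<Omega> (\<phi> i)"
    and ON: "\<And>i j. (\<integral>x. \<phi> i x * \<phi> j x \<partial>\<nu>) = (if i = j then 1 else 0)"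
    and mono: "\<And>i j. i \<le> j \<Longrightarrow> lam j \<le> lam i" and lpos: "\<And>i. 0 < lam i"
    unfolding kernel_setting_def by auto
  interpret finite_measure \<nu> by fact
  have sp: "space \<nu> = \<Omega>"
    using sets_eq_imp_space_eq[OF sets] by (simp add: space_restrict_space)
  have int: "integrable \<nu> g" if "continuous_on \<Omega> g" for g :: "(nat \<Rightarrow> real) \<Rightarrow> real"
    by (rule cont_int[OF cpt sets fm that])
  define \<mu>\<Omega> where "\<mu>\<Omega> = measure \<nu> (space \<nu>)"
  have ds_gt: "\<delta>s > \<mu>\<Omega> * \<epsilon>\<^sup>2" using ds unfolding delta_set_def \<mu>\<Omega>_def by auto
  have \<mu>pos: "\<mu>\<Omega> > 0"
  proof (rule ccontr)
    assume "\<not> \<mu>\<Omega> > 0"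
    then have "\<mu>\<Omega> = 0" using measure_nonneg[of \<nu> "space \<nu>"] unfolding \<mu>\<Omega>_def by linarith
    then have "emeasure \<nu> (space \<nu>) = 0" unfolding \<mu>\<Omega>_def by (simp add: emeasure_eq_measure)
    then have "space \<nu> \<in> null_sets \<nu>" by auto
    then have ae: "AE x in \<nu>. \<phi> 0 x * \<phi> 0 x = 0" by (rule AE_I') auto
    have "(\<integral>x. \<phi> 0 x * \<phi> 0 x \<partial>\<nu>) = (\<integral>x. 0 \<partial>\<nu>)"
      by (rule integral_cong_AE) (use ae int[of "\<lambda>x. \<phi> 0 x * \<phi> 0 x"] phic in \<open>auto intro!: continuous_intros\<close>)
    then show False using ON[of 0 0] by simp
  qed
  have ne: "\<Omega> \<noteq> {}" using \<mu>pos unfolding \<mu>\<Omega>_def sp by auto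
  have dspos: "\<delta>s > 0" using ds_gt \<mu>pos eps by (smt (verit) mult_pos_pos zero_less_power)
  show "H_ext (\<epsilon> / 2) (rkhs_ball \<Omega> \<phi> lam) \<Omega> \<ge> ereal (entropyE \<delta>s lam / 4)"
  proof (cases "\<exists>Cs. finite Cs \<and> ext_cover \<Omega> (\<epsilon>/2) (rkhs_ball \<Omega> \<phi> lam) Cs")
    case False
    have "H_ext (\<epsilon> / 2) (rkhs_ball \<Omega> \<phi> lam) \<Omega> = \<infinity>"
      unfolding H_ext_def by (simp only: False if_False)
    then show ?thesis by simp
  next
    case True
    define m where "m = (LEAST m. \<exists>Cs. finite Cs \<and> card Cs = m \<and> ext_cover \<Omega> (\<epsilon>/2) (rkhs_ball \<Omega> \<phi> lam) Cs)"
    have "\<exists>Cs. finite Cs \<and> card Cs = m \<and> ext_cover \<Omega> (\<epsilon>/2) (rkhs_ball \<Omega> \<phi> lam) Cs"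
      unfolding m_def by (rule LeastI_ex) (use True in blast)
    then obtain Cs where Cs: "finite Cs" "card Cs = m" "ext_cover \<Omega> (\<epsilon>/2) (rkhs_ball \<Omega> \<phi> lam) Cs"
      by blast
    have Hm: "H_ext (\<epsilon> / 2) (rkhs_ball \<Omega> \<phi> lam) \<Omega> = ereal (ln (real m))"
      using True by (simp add: H_ext_def m_def)
    have key: "entropyE \<delta>s lam / 4 \<le> ln (real m)"
    proof (cases "finite {i. lam i > \<delta>s}")
      case False
      then have "entropyE \<delta>s lam = 0" unfolding entropyE_def by simp
      moreover have "0 \<le> ln (real m)" by (cases "m = 0") auto
      ultimately show ?thesis by simp
    next
      case True
      have ex: "\<exists>i. lam i \<le> \<delta>s"
      proof (rule ccontr)
        assume "\<not> (\<exists>i. lam i \<le> \<delta>s)"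
        then have "{i. lam i > \<delta>s} = UNIV" by (auto simp: not_le)
        then show False using True by simp
      qed
      define N where "N = (LEAST i. lam i \<le> \<delta>s)"
      have setN: "{i. lam i > \<delta>s} = {..<N}"
      proof (intro set_eqI iffI)
        fix i assume "i \<in> {i. lam i > \<delta>s}"
        then have li: "lam i > \<delta>s" by simp
        show "i \<in> {..<N}"
        proof (rule ccontr)
          assume "i \<notin> {..<N}"
          then have "N \<le> i" by simp
          then have "lam i \<le> lam N" by (rule mono)
          also have "lam N \<le> \<delta>s" unfolding N_def by (rule LeastI_ex[OF ex])
          finally show False using li by simp
        qed
      next
        fix i assume "i \<in> {..<N}"
        then have "\<not> lam i \<le> \<delta>s" unfolding N_def by (auto dest: not_less_Least)
        then show "i \<in> {i. lam i > \<delta>s}" by simp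
      qed
      have Eeq: "entropyE \<delta>s lam = (\<Sum>i<N. ln (lam i / \<delta>s))"
        unfolding entropyE_def setN ..
      define r where "r = sqrt \<mu>\<Omega> * \<epsilon> / 2"
      have rpos: "r > 0" using \<mu>pos eps by (simp add: r_def)
      have r2: "r\<^sup>2 = \<mu>\<Omega> * (\<epsilon> / 2)\<^sup>2"
        using \<mu>pos by (simp add: r_def power_mult_distrib power_divide)
      define b where "b c = (\<lambda>i. \<integral>x. c x * \<phi> i x \<partial>\<nu>)" for c :: "(nat\<Rightarrow>real) \<Rightarrow> real"
      have cov: "\<exists>bb\<in>b ` Cs. (\<Sum>i<N. (a i - bb i)\<^sup>2) < r\<^sup>2" if ell: "(\<Sum>i<N. (a i)\<^sup>2 / lam i) < 1" for a
      proof -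
        define f where "f = (\<lambda>x. \<Sum>i<N. a i * \<phi> i x)"
        have fcont: "continuous_on \<Omega> f" unfolding f_def by (intro continuous_intros phic)
        have "f \<in> rkhs_ball \<Omega> \<phi> lam"
          unfolding rkhs_ball_def
        proof (intro CollectI exI[of _ "\<lambda>i. if i < N then a i else 0"] conjI ballI)
          have "(\<lambda>i. (if i < N then a i else 0)\<^sup>2 / lam i) sums (\<Sum>i\<in>{..<N}. (if i < N then a i else 0)\<^sup>2 / lam i)"
            by (rule sums_finite) auto
          then have s: "(\<lambda>i. (if i < N then a i else 0)\<^sup>2 / lam i) sums (\<Sum>i<N. (a i)\<^sup>2 / lam i)"
            by simp
          show "summable (\<lambda>i. (if i < N then a i else 0)\<^sup>2 / lam i)" using s by (rule sums_summable)
          show "(\<Sum>i. (if i < N then a i else 0)\<^sup>2 / lam i) < 1" using s ell sums_unique by fastforce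
        next
          fix x assume "x \<in> \<Omega>"
          have "(\<lambda>i. (if i < N then a i else 0) * \<phi> i x) sums (\<Sum>i\<in>{..<N}. (if i < N then a i else 0) * \<phi> i x)"
            by (rule sums_finite) auto
          then show "(\<lambda>i. (if i < N then a i else 0) * \<phi> i x) sums f x" by (simp add: f_def)
        qed
        then obtain c where c: "c \<in> Cs" "sup_dist \<Omega> f c < \<epsilon>/2" using Cs(3) unfolding ext_cover_def by blast
        have ccont: "continuous_on \<Omega> c" using Cs(3) c(1) unfolding ext_cover_def by blast
        define h where "h x = f x - c x" for x
        have hcont: "continuous_on \<Omega> h" unfolding h_def by (intro continuous_intros fcont ccont)
        have bes: "(\<Sum>i<N. (\<integral>x. h x * \<phi> i x \<partial>\<nu>)\<^sup>2) \<le> (\<integral>x. (h x)\<^sup>2 \<partial>\<nu>)"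
          by (rule bessel[OF ON]) (auto intro!: int continuous_intros hcont phic)
        have coef: "(\<integral>x. h x * \<phi> i x \<partial>\<nu>) = a i - b c i" if "i < N" for i
        proof -
          have e1: "(\<lambda>x. h x * \<phi> i x) = (\<lambda>x. f x * \<phi> i x - c x * \<phi> i x)"
            by (auto simp: h_def algebra_simps)
          have e2: "(\<lambda>x. f x * \<phi> i x) = (\<lambda>x. \<Sum>j<N. a j * (\<phi> j x * \<phi> i x))"
            by (auto simp: f_def sum_distrib_right mult.assoc)
          have "(\<integral>x. h x * \<phi> i x \<partial>\<nu>) = (\<integral>x. f x * \<phi> i x \<partial>\<nu>) - (\<integral>x. c x * \<phi> i x \<partial>\<nu>)"
          proof -
            have i1: "integrable \<nu> (\<lambda>x. f x * \<phi> i x)" by (auto intro!: int continuous_intros fcont phic)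
            have i2: "integrable \<nu> (\<lambda>x. c x * \<phi> i x)" by (auto intro!: int continuous_intros ccont phic)
            show ?thesis unfolding e1 using i1 i2 by simp
          qed
          also have "(\<integral>x. f x * \<phi> i x \<partial>\<nu>) = (\<Sum>j<N. a j * (\<integral>x. \<phi> j x * \<phi> i x \<partial>\<nu>))"
          proof -
            have ij: "integrable \<nu> (\<lambda>x. a j * (\<phi> j x * \<phi> i x))" for j
              by (auto intro!: int continuous_intros phic)
            show ?thesis unfolding e2 using ij by simp
          qed
          also have "\<dots> = (\<Sum>j<N. if j = i then a i else 0)"
            by (intro sum.cong refl) (simp add: ON)
          also have "\<dots> = a i" using that by (subst sum.delta) auto
          finally show ?thesis by (simp add: b_def)
        qed
        define s where "s = sup_dist \<Omega> f c"
        have bdd: "bdd_above ((\<lambda>x. \<bar>f x - c x\<bar>) ` \<Omega>)"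
          by (intro bounded_imp_bdd_above compact_imp_bounded compact_continuous_image cpt
              continuous_intros fcont ccont)
        have sup: "\<bar>h x\<bar> \<le> s" if "x \<in> \<Omega>" for x
          unfolding s_def sup_dist_def h_def by (rule cSUP_upper[OF that bdd])
        have s0: "0 \<le> s" using ne sup by force
        have "(\<integral>x. (h x)\<^sup>2 \<partial>\<nu>) \<le> (\<integral>x. s\<^sup>2 \<partial>\<nu>)"
        proof (rule integral_mono)
          show "integrable \<nu> (\<lambda>x. (h x)\<^sup>2)" by (auto intro!: int continuous_intros hcont)
          show "integrable \<nu> (\<lambda>x. s\<^sup>2)" by simp
          fix x assume "x \<in> space \<nu>"
          then have "\<bar>h x\<bar> \<le> s" using sup sp by auto
          then have "\<bar>h x\<bar>\<^sup>2 \<le> s\<^sup>2" by (rule power_mono) simp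
          then show "(h x)\<^sup>2 \<le> s\<^sup>2" by simp
        qed
        also have "\<dots> = \<mu>\<Omega> * s\<^sup>2" by (simp add: \<mu>\<Omega>_def)
        also have "\<dots> < \<mu>\<Omega> * (\<epsilon>/2)\<^sup>2"
          using s0 c(2) \<mu>pos by (intro mult_strict_left_mono power_strict_mono) (auto simp: s_def)
        finally have "(\<Sum>i<N. (\<integral>x. h x * \<phi> i x \<partial>\<nu>)\<^sup>2) < r\<^sup>2" using bes r2 by linarith
        then have "(\<Sum>i<N. (a i - b c i)\<^sup>2) < r\<^sup>2" using coef by simp
        then show ?thesis using c(1) by blast
      qed
      have vc: "(\<Prod>i<N. sqrt (lam i)) / 2^N \<le> real (card (b ` Cs)) * r^N"
        by (rule vol_cover[OF finite_imageI[OF Cs(1)] lpos rpos cov])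
      have "card (b ` Cs) \<le> m" using card_image_le[OF Cs(1), of b] Cs(2) by simp
      then have "real (card (b ` Cs)) * r^N \<le> real m * r^N" using rpos by (intro mult_right_mono) auto
      with vc have P: "(\<Prod>i<N. sqrt (lam i)) / 2^N \<le> real m * r^N" by linarith
      define q where "q i = sqrt (lam i) / (2 * r)" for i
      have "(\<Prod>i<N. q i) = (\<Prod>i<N. sqrt (lam i)) / (2 * r)^N"
        by (simp add: q_def prod_dividef)
      also have "\<dots> = ((\<Prod>i<N. sqrt (lam i)) / 2^N) / r^N" by (simp add: power_mult_distrib)
      also have "\<dots> \<le> real m" using P rpos by (simp add: pos_divide_le_eq mult_ac)
      finally have Pq: "(\<Prod>i<N. q i) \<le> real m" .
      have qpos: "q i > 0" for i using lpos rpos by (simp add: q_def)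
      have Ppos: "(\<Prod>i<N. q i) > 0" using qpos by (intro prod_pos) auto
      have "ln (\<Prod>i<N. q i) \<le> ln (real m)" using Pq Ppos by (intro ln_mono) auto
      moreover have "ln (\<Prod>i<N. q i) = (\<Sum>i<N. ln (q i))" using qpos by (intro ln_prod) (auto simp: less_imp_neq[symmetric])
      moreover have "ln (lam i / \<delta>s) / 4 \<le> ln (q i)" if "i < N" for i
      proof -
        define \<rho> where "\<rho> = \<mu>\<Omega> * \<epsilon>\<^sup>2"
        have \<rho>pos: "\<rho> > 0" using \<mu>pos eps by (simp add: \<rho>_def)
        have "2 * r = sqrt \<rho>" using \<mu>pos eps by (simp add: r_def \<rho>_def real_sqrt_mult)
        then have "q i = sqrt (lam i / \<rho>)" by (simp add: q_def real_sqrt_divide)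
        then have lq: "ln (q i) = ln (lam i / \<rho>) / 2" using lpos[of i] \<rho>pos ln_sqrt[of "lam i / \<rho>"] by simp
        have li: "lam i > \<delta>s" using that setN by auto
        have "lam i / \<delta>s \<le> lam i / \<rho>"
          using ds_gt \<rho>pos lpos[of i] by (intro divide_left_mono) (auto simp: \<rho>_def)
        then have "ln (lam i / \<delta>s) \<le> ln (lam i / \<rho>)" using dspos lpos[of i] by (intro ln_mono) auto
        moreover have "0 \<le> ln (lam i / \<delta>s)" using li dspos by simp
        ultimately show ?thesis using lq by linarith
      qed
      then have "(\<Sum>i<N. ln (lam i / \<delta>s) / 4) \<le> (\<Sum>i<N. ln (q i))" by (intro sum_mono) auto
      ultimately show ?thesis unfolding Eeq by (simp add: sum_divide_distrib)
    qed
    then show ?thesis using Hm by simp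
  qed
qed

end
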